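(* Let $n\ge 2$, $N=\{1,\dots,n\}$, for each $i\in N$ let $A_i$ be a nonempty finite set, $A=\prod_{i\in N}A_i$, and let $u_i:A\to\mathbb{R}$ for $i\in N$, with $u(a)=(u_i(a))_{i\in N}$. Then for every $\delta\in(0,1]$ and every $T\in\mathbb{N}$, $$F(\delta,T)=\operatorname{co}\left(\{v(a^{[n]}) : a^{[n]}\in A^n\}\right),$$ where $F(\delta,T)$ and $v$ are as defined in the context.
   Context: For $a^{[nT]}=(a^1,\dots,a^{nT})\in A^{nT}$ extend the indices periodically by $a^s=a^{s-nT}$ for $s\ge nT+1$, and define for $i\in N$ $$U_i(a^{[nT]})=\frac{1}{\sum_{k=1}^{nT}\delta^{k-1}}\sum_{k=1}^{nT}\delta^{k-1}u_i\big(a^{(i-1)T+k}\big),$$ and $U(a^{[nT]})=(U_i(a^{[nT]}))_{i\in N}\in\mathbb{R}^n$. Let $F(\delta,T)=\operatorname{co}\left(\bigcup_{a^{[nT]}\in A^{nT}}\{U(a^{[nT]})\}\right)$, where $\operatorname{co}$ denotes convex hull. For $a^{[n]}=(a^1,\dots,a^n)\in A^n$ extend indices by $a^s=a^{s-n}$ for $s\ge n+1$ and define $$v_i(a^{[n]})=\frac{1}{\sum_{k=1}^n\delta^{(k-1)T}}\sum_{k=1}^n\delta^{(k-1)T}u_i\big(a^{i+k-1}\big),\qquad v(a^{[n]})=(v_i(a^{[n]}))_{i\in N}.$$ (Interpretation: $F(\delta,T)$ is the set of periodic feasible payoffs of the overlapping-generations repeated game in which player $i$ of each generation lives $nT$ periods,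 entering $T$ periods after player $i-1$, with common discount factor $\delta$.) *)

theory Defs
  imports "HOL-Analysis.Analysis"
begin

(* Players are numbered 1..n.  An action profile is a function a :: nat => 'a,
   with a i \<in> Ai i for i \<in> {1..n} (extensional outside {1..n}).
   A finite sequence of profiles a^1..a^m is a function s :: nat => (nat => 'a),
   whose values at positions 1..m matter. *)

definition profiles :: "nat \<Rightarrow> (nat \<Rightarrow> 'a set) \<Rightarrow> (nat \<Rightarrow> 'a) set" where
  "profiles n Ai = PiE {1..n} Ai"

definition seqs :: "nat \<Rightarrow> 'b set \<Rightarrow> (nat \<Rightarrow> 'b) set" where
  "seqs m A = PiE {1..m} (\<lambda>_. A)"

(* periodic extension: a^s = a^{s-m} for s \<ge> m+1 (s \<ge> 1) *)
definition per :: "nat \<Rightarrow> (nat \<Rightarrow> 'b) \<Rightarrow> nat \<Rightarrow> 'b" where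
  "per m s k = s (((k - 1) mod m) + 1)"

definition Upay :: "nat \<Rightarrow> nat \<Rightarrow> real \<Rightarrow> (nat \<Rightarrow> (nat \<Rightarrow> 'a) \<Rightarrow> real)
                    \<Rightarrow> (nat \<Rightarrow> (nat \<Rightarrow> 'a)) \<Rightarrow> nat \<Rightarrow> real" where
  "Upay n T \<delta> u s i =
     (\<Sum>k=1..n*T. \<delta>^(k-1) * u i (per (n*T) s ((i-1)*T + k))) / (\<Sum>k=1..n*T. \<delta>^(k-1))"

definition vpay :: "nat \<Rightarrow> nat \<Rightarrow> real \<Rightarrow> (nat \<Rightarrow> (nat \<Rightarrow> 'a) \<Rightarrow> real)
                    \<Rightarrow> (nat \<Rightarrow> (nat \<Rightarrow> 'a)) \<Rightarrow> nat \<Rightarrow> real" where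
  "vpay n T \<delta> u s i =
     (\<Sum>k=1..n. \<delta>^((k-1)*T) * u i (per n s (i + k - 1))) / (\<Sum>k=1..n. \<delta>^((k-1)*T))"

(* turn a payoff assignment to players 1..n into a vector of R^n, where the
   coordinates 'n are identified with players via the bijection pl : {1..n} -> 'n *)
definition vec_of :: "(nat \<Rightarrow> 'n::finite) \<Rightarrow> nat \<Rightarrow> (nat \<Rightarrow> real) \<Rightarrow> real^'n" where
  "vec_of pl n f = (\<chi> j. f (the_inv_into {1..n} pl j))"

definition Fset :: "(nat \<Rightarrow> 'n::finite) \<Rightarrow> nat \<Rightarrow> (nat \<Rightarrow> 'a set)
                    \<Rightarrow> (nat \<Rightarrow> (nat \<Rightarrow> 'a) \<Rightarrow> real) \<Rightarrow> real \<Rightarrow> nat \<Rightarrow> (real^'n) set" where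
  "Fset pl n Ai u \<delta> T =
     convex hull ((\<lambda>s. vec_of pl n (Upay n T \<delta> u s)) ` seqs (n*T) (profiles n Ai))"

end

theory Submission
  imports Defs
begin

lemma regroup:
  fixes f :: "nat \<Rightarrow> real"
  shows "(\<Sum>k=1..n*T. f k) = (\<Sum>j<n. \<Sum>t<T. f (j*T+t+1))"
proof -
  have "(\<Sum>k=1..n*T. f k) = (\<Sum>k<n*T. f (Suc k))"
    by (simp add: sum.atLeast1_atMost_eq)
  also have "\<dots> = (\<Sum>j<n. \<Sum>k\<in>{j*T..<j*T+T}. f (Suc k))"
    by (simp add: sum.nat_group)
  also have "\<dots> = (\<Sum>j<n. \<Sum>t<T. f (j*T+t+1))"
  proof (rule sum.cong[OF refl])
    fix j
    show "(\<Sum>k\<in>{j*T..<j*T+T}. f (Suc k)) = (\<Sum>t<T. f (j*T+t+1))"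
      by (subst sum.atLeastLessThan_shift_0) (simp add: lessThan_atLeast0 add.commute)
  qed
  finally show ?thesis .
qed

lemma modT: "t < T \<Longrightarrow> (q*T + t) mod (n*T) = (q mod n)*T + (t::nat)"
  by (simp add: mod_mult2_eq[of _ T n] mult.commute[of n T])

definition bt :: "(nat \<Rightarrow> 'b) \<Rightarrow> nat \<Rightarrow> nat \<Rightarrow> nat \<Rightarrow> nat \<Rightarrow> 'b" where
  "bt s T n t = restrict (\<lambda>m. s ((m-1)*T + t + 1)) {1..n}"

lemma key:
  assumes i: "i \<ge> 1" and n: "n \<ge> 1" and T: "T \<ge> 1" and d: "\<delta> > 0"
  shows "Upay n T \<delta> u s i = (\<Sum>t<T. (\<delta>^t / (\<Sum>t<T. \<delta>^t)) * vpay n T \<delta> u (bt s T n t) i)"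
proof -
  define Dv where "Dv = (\<Sum>j<n. \<delta>^(j*T))"
  define Dt where "Dt = (\<Sum>t<T. \<delta>^t)"
  define g where "g j t = u i (s (((i-1+j) mod n)*T + t + 1))" for j t
  have Dvp: "Dv > 0" unfolding Dv_def using n d
    by (intro sum_pos) (auto simp: lessThan_empty_iff)
  have Dtp: "Dt > 0" unfolding Dt_def using T d
    by (intro sum_pos) (auto simp: lessThan_empty_iff)
  have num: "(\<Sum>k=1..n*T. \<delta>^(k-1) * u i (per (n*T) s ((i-1)*T + k)))
      = (\<Sum>j<n. \<Sum>t<T. \<delta>^t * \<delta>^(j*T) * g j t)"
  proof -
    have "(\<Sum>k=1..n*T. \<delta>^(k-1) * u i (per (n*T) s ((i-1)*T + k)))
       = (\<Sum>j<n. \<Sum>t<T. \<delta>^(j*T+t) * u i (per (n*T) s ((i-1)*T + (j*T+t+1))))"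
      using regroup[of "\<lambda>k. \<delta>^(k-1) * u i (per (n*T) s ((i-1)*T + k))" n T] by simp
    also have "\<dots> = (\<Sum>j<n. \<Sum>t<T. \<delta>^t * \<delta>^(j*T) * g j t)"
    proof (intro sum.cong refl)
      fix j t assume "t \<in> {..<T}"
      hence "t < T" by simp
      have e: "(i-1)*T + (j*T+t+1) - 1 = (i-1+j)*T + t" by (simp add: algebra_simps)
      have "per (n*T) s ((i-1)*T + (j*T+t+1)) = s (((i-1+j)*T + t) mod (n*T) + 1)"
        unfolding per_def e ..
      hence "per (n*T) s ((i-1)*T + (j*T+t+1)) = s (((i-1+j) mod n)*T + t + 1)"
        using modT[OF \<open>t<T\<close>] by simp
      thus "\<delta>^(j*T+t) * u i (per (n*T) s ((i-1)*T + (j*T+t+1))) = \<delta>^t * \<delta>^(j*T) * g j t"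
        unfolding g_def by (simp add: power_add)
    qed
    finally show ?thesis .
  qed
  have den: "(\<Sum>k=1..n*T. \<delta>^(k-1)) = Dv * Dt"
  proof -
    have "(\<Sum>k=1..n*T. \<delta>^(k-1)) = (\<Sum>j<n. \<Sum>t<T. \<delta>^(j*T+t+1-1))"
      using regroup[of "\<lambda>k. \<delta>^(k-1)" n T] by simp
    also have "\<dots> = Dv * Dt"
      unfolding Dv_def Dt_def by (simp add: power_add sum_product)
    finally show ?thesis .
  qed
  have vp: "vpay n T \<delta> u (bt s T n t) i = (\<Sum>j<n. \<delta>^(j*T) * g j t) / Dv" for t
  proof -
    have "vpay n T \<delta> u (bt s T n t) i = (\<Sum>j<n. \<delta>^(j*T) * u i (per n (bt s T n t) (i + Suc j - 1))) / (\<Sum>j<n. \<delta>^(j*T))"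
      unfolding vpay_def by (simp add: sum.atLeast1_atMost_eq)
    also have "\<dots> = (\<Sum>j<n. \<delta>^(j*T) * g j t) / Dv"
    proof -
      have "per n (bt s T n t) (i + Suc j - 1) = s (((i-1+j) mod n)*T + t + 1)" for j
      proof -
        have e: "i + Suc j - 1 - 1 = i - 1 + j" using i by simp
        have "(i-1+j) mod n < n" using n by simp
        thus ?thesis unfolding per_def bt_def e by simp
      qed
      thus ?thesis unfolding g_def Dv_def by simp
    qed
    finally show ?thesis .
  qed
  have "Upay n T \<delta> u s i = (\<Sum>j<n. \<Sum>t<T. \<delta>^t * \<delta>^(j*T) * g j t) / (Dv * Dt)"
    unfolding Upay_def num den ..
  also have "\<dots> = (\<Sum>t<T. (\<delta>^t / Dt) * ((\<Sum>j<n. \<delta>^(j*T) * g j t) / Dv))"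
    using Dvp Dtp
    by (simp add: sum_divide_distrib sum_distrib_left sum.swap[of _ "{..<n}"] field_simps)
  finally show ?thesis unfolding vp Dt_def .
qed

lemma vec_of_comp:
  assumes "bij_betw pl {1..n} (UNIV :: 'n::finite set)"
  shows "vec_of pl n f $ j = f (the_inv_into {1..n} pl j)" and "the_inv_into {1..n} pl j \<in> {1..n}"
proof -
  show "vec_of pl n f $ j = f (the_inv_into {1..n} pl j)" by (simp add: vec_of_def)
  have "j \<in> pl ` {1..n}" using assms by (simp add: bij_betw_def)
  thus "the_inv_into {1..n} pl j \<in> {1..n}"
    using assms the_inv_into_into[of pl "{1..n}" j "{1..n}"] by (simp add: bij_betw_def)
qed

lemma bt_in:
  assumes "s \<in> seqs (n*T) P" "t < T"
  shows "bt s T n t \<in> seqs n P"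
  unfolding seqs_def bt_def
proof (rule PiE_I)
  fix m assume m: "m \<in> {1..n}"
  have "(m-1)*T + t < (m-1)*T + T" using assms(2) by simp
  also have "\<dots> = m*T" using m by (cases m) auto
  also have "\<dots> \<le> n*T" using m by simp
  finally have "(m-1)*T + t + 1 \<in> {1..n*T}" by simp
  thus "restrict (\<lambda>m. s ((m-1)*T + t + 1)) {1..n} m \<in> P"
    using assms(1) m unfolding seqs_def by auto
qed auto

theorem theorem1:
  fixes n T :: nat and \<delta> :: real
    and Ai :: "nat \<Rightarrow> 'a set"
    and u :: "nat \<Rightarrow> (nat \<Rightarrow> 'a) \<Rightarrow> real"
    and pl :: "nat \<Rightarrow> 'n::finite"
  assumes "n \<ge> 2"
    and "bij_betw pl {1..n} (UNIV :: 'n set)"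
    and "\<And>i. i \<in> {1..n} \<Longrightarrow> finite (Ai i) \<and> Ai i \<noteq> {}"
    and "0 < \<delta>" and "\<delta> \<le> 1"
    and "T \<ge> 1"
  shows "Fset pl n Ai u \<delta> T =
         convex hull ((\<lambda>s. vec_of pl n (vpay n T \<delta> u s)) ` seqs n (profiles n Ai))"
proof -
  define P where "P = profiles n Ai"
  define V where "V = (\<lambda>s. vec_of pl n (vpay n T \<delta> u s)) ` seqs n P"
  define W where "W = (\<lambda>s. vec_of pl n (Upay n T \<delta> u s)) ` seqs (n*T) P"
  define w where "w t = \<delta>^t / (\<Sum>t<T. \<delta>^t)" for t
  have Dtp: "(\<Sum>t<T. \<delta>^t) > 0" using assms(4,6)
    by (intro sum_pos) (auto simp: lessThan_empty_iff)
  have wsum: "(\<Sum>t<T. w t) = 1" unfolding w_def using Dtp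
    by (simp add: sum_divide_distrib[symmetric])
  have wpos: "w t \<ge> 0" for t unfolding w_def using Dtp assms(4) by simp
  have decomp: "vec_of pl n (Upay n T \<delta> u s) = (\<Sum>t<T. w t *\<^sub>R vec_of pl n (vpay n T \<delta> u (bt s T n t)))" for s
  proof (rule vec_eq_iff[THEN iffD2], rule allI)
    fix j
    have ij: "the_inv_into {1..n} pl j \<in> {1..n}" using vec_of_comp(2)[OF assms(2)] .
    show "vec_of pl n (Upay n T \<delta> u s) $ j = (\<Sum>t<T. w t *\<^sub>R vec_of pl n (vpay n T \<delta> u (bt s T n t))) $ j"
      unfolding sum_component vector_scaleR_component vec_of_comp(1)[OF assms(2)] w_def
      using key[of "the_inv_into {1..n} pl j" n T \<delta> u s] ij assms by simp
  qed
  have "W \<subseteq> convex hull V"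
  proof
    fix x assume "x \<in> W"
    then obtain s where s: "s \<in> seqs (n*T) P" and x: "x = vec_of pl n (Upay n T \<delta> u s)"
      unfolding W_def by auto
    show "x \<in> convex hull V" unfolding x decomp
      by (rule convex_sum) (auto simp: wsum wpos V_def intro!: hull_inc bt_in[OF s])
  qed
  hence 1: "convex hull W \<subseteq> convex hull V"
    by (intro hull_minimal) auto
  have "V \<subseteq> W"
  proof
    fix x assume "x \<in> V"
    then obtain b where b: "b \<in> seqs n P" and x: "x = vec_of pl n (vpay n T \<delta> u b)"
      unfolding V_def by auto
    define s where "s = restrict (\<lambda>k. b ((k-1) div T + 1)) {1..n*T}"
    have sin: "s \<in> seqs (n*T) P" unfolding seqs_def s_def
    proof (rule PiE_I)
      fix k assume k: "k \<in> {1..n*T}"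
      hence "k - 1 < n*T" by auto
      hence "(k-1) div T < n" using assms(6)
        by (metis div_less_iff_less_mult mult.commute not_one_le_zero not_gr0)
      hence "(k-1) div T + 1 \<in> {1..n}" by simp
      thus "restrict (\<lambda>k. b ((k-1) div T + 1)) {1..n*T} k \<in> P" using b k unfolding seqs_def by auto
    qed auto
    have bte: "bt s T n t = b" if t: "t < T" for t
    proof
      fix m show "bt s T n t m = b m"
      proof (cases "m \<in> {1..n}")
        case True
        have "(m-1)*T + t < (m-1)*T + T" using t by simp
        also have "\<dots> = m*T" using True by (cases m) auto
        also have "\<dots> \<le> n*T" using True by simp
        finally have "(m-1)*T + t + 1 \<in> {1..n*T}" by simp
        moreover have "((m-1)*T + t) div T = m - 1" using t by simp
        ultimately show ?thesis using True unfolding bt_def s_def by simp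
      next
        case False thus ?thesis using b unfolding bt_def seqs_def by auto
      qed
    qed
    have "vec_of pl n (Upay n T \<delta> u s) = (\<Sum>t<T. w t *\<^sub>R x)"
      unfolding decomp x by (rule sum.cong) (auto simp: bte)
    also have "\<dots> = x" by (simp add: scaleR_sum_left[symmetric] wsum)
    finally show "x \<in> W" unfolding W_def using sin by (metis image_eqI)
  qed
  hence 2: "convex hull V \<subseteq> convex hull W" by (rule hull_mono)
  show ?thesis unfolding Fset_def using 1 2
    by (simp add: V_def W_def P_def)
qed

end
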